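(* For all $n,k\ge 0$, with $C_j=\frac{1}{j+1}\binom{2j}{j}$ the Catalan numbers, $$\frac{1}{n+1}\binom{2n+2}{n-k}\binom{n+k}{k}=\sum_{j=0}^{n}\binom{j}{k}\binom{n+k}{2j}2^{\,n+k-2j}C_j .$$ Equivalently, the Borel polynomials $B_n(y)=\sum_{k=0}^nB_{n,k}y^k$ are the image of the Catalan sequence under the (bivariate) Riordan array $\left(\frac{1}{1-2x},\frac{x(x+y)}{(1-2x)^2}\right)$.
   Context: A Riordan array $(g(x),f(x))$ with $g(0)\neq0$, $f(0)=0$, $f'(0)\ne0$ is the lower-triangular matrix with $(n,k)$ entry $[x^n]g(x)f(x)^k$; it acts on a sequence with generating function $h(x)$ to give the sequence with generating function $g(x)h(f(x))$. Binomial coefficients with lower index out of range are $0$. *)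

theory Defs
  imports Complex_Main
begin

definition catalan :: "nat \<Rightarrow> rat" where
  "catalan j = of_nat ((2*j) choose j) / of_nat (j + 1)"

end

theory Submission imports Defs "HOL-Computational_Algebra.Polynomial" begin
lemma term_id:
  fixes k a r :: nat
  defines "n \<equiv> k + 2*a + r"
  shows "(1 / of_nat (n + 1)) * of_nat ((n + k) choose k) * (of_nat ((n+1) choose a) * (of_nat ((n+1-a) choose (n - k - 2*a)) * 2^(n-k-2*a)))
     = (of_nat ((a+k) choose k) * of_nat ((n + k) choose (2*(a+k))) * 2 ^ (n + k - 2*(a+k)) * catalan (a+k) :: rat)"
proof -
  have b1: "(of_nat ((n + k) choose k)::rat) = fact (n+k) / (fact k * fact n)"
    by (subst binomial_fact) (simp_all add: n_def ac_simps)
  have b2: "(of_nat ((n+1) choose a)::rat) = fact (n+1) / (fact a * fact (r + (a+k+1)))"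
    by (subst binomial_fact) (simp_all add: n_def ac_simps)
  have b3: "(of_nat ((n+1-a) choose r)::rat) = fact (r + (a+k+1)) / (fact r * fact (a+k+1))"
    by (subst binomial_fact) (simp_all add: n_def ac_simps)
  have b4: "(of_nat ((a+k) choose k)::rat) = fact (a+k) / (fact k * fact a)"
    by (subst binomial_fact) (simp_all add: n_def ac_simps)
  have b5: "(of_nat ((n+k) choose (2*(a+k)))::rat) = fact (n+k) / (fact (2*(a+k)) * fact r)"
    by (subst binomial_fact) (simp_all add: n_def ac_simps)
  have b6: "(of_nat ((2*(a+k)) choose (a+k))::rat) = fact (2*(a+k)) / (fact (a+k) * fact (a+k))"
    by (subst binomial_fact) (simp_all add: mult_2)
  have e: "n-k-2*a = r" "n + k - 2*(a+k) = r" by (simp_all add: n_def ac_simps)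
  have f1: "fact (n+1) = (of_nat (n+1) :: rat) * fact n" by simp
  have f2: "fact (a+k+1) = (of_nat (a+k+1) :: rat) * fact (a+k)" by simp
  have nz: "(fact m :: rat) \<noteq> 0" for m by simp
  show ?thesis
    unfolding catalan_def e unfolding b1 b2 b3 b4 b5 b6 f1 f2
    by (simp add: field_simps nz del: of_nat_add of_nat_Suc)
qed
lemma c12: "coeff ([:1,2:]^s) i = (of_nat (s choose i) * 2^i :: rat)"
proof (cases "i \<le> s")
  case True thus ?thesis by (simp add: coeff_linear_poly_power)
next
  case False
  have "degree ([:1,2::rat:]^s) \<le> s" using degree_power_le[of "[:1,2::rat:]" s] by simp
  thus ?thesis using False by (simp add: coeff_eq_0)
qed

lemma key: "of_nat ((2*M) choose t) = (\<Sum>a\<le>M. of_nat (M choose a) * (if 2*a \<le> t then of_nat ((M-a) choose (t-2*a)) * 2^(t-2*a) else 0) :: rat)"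
proof -
  have sq: "[:1,1::rat:]^2 = monom 1 2 + [:1,2:]"
    by (simp add: power2_eq_square monom_altdef)
  have "of_nat ((2*M) choose t) = coeff ([:1,1::rat:]^(2*M)) t"
    by (cases "t \<le> 2*M") (simp_all add: coeff_linear_poly_power coeff_eq_0 degree_linear_power)
  also have "[:1,1::rat:]^(2*M) = (monom 1 2 + [:1,2:])^M" by (simp add: power_mult sq)
  also have "\<dots> = (\<Sum>a\<le>M. of_nat (M choose a) * (monom 1 2)^a * [:1,2:]^(M-a))"
    by (rule binomial_ring)
  also have "coeff \<dots> t = (\<Sum>a\<le>M. of_nat (M choose a) * (if 2*a \<le> t then of_nat ((M-a) choose (t-2*a)) * 2^(t-2*a) else 0))"
    unfolding coeff_sum
  proof (rule sum.cong[OF refl])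
    fix a
    have "of_nat (M choose a) * (monom 1 2)^a * [:1,2::rat:]^(M-a) = monom (of_nat (M choose a)) (2*a) * [:1,2:]^(M-a)"
      by (simp add: monom_power mult.commute of_nat_monom mult_monom)
    thus "coeff (of_nat (M choose a) * (monom 1 2)^a * [:1,2::rat:]^(M-a)) t = of_nat (M choose a) * (if 2*a \<le> t then of_nat ((M-a) choose (t-2*a)) * 2^(t-2*a) else 0)"
      by (simp add: coeff_monom_mult c12)
  qed
  finally show ?thesis .
qed
theorem mainTheorem5:
  fixes n k :: nat
  shows "(1 / of_nat (n + 1)) * (if k \<le> n then of_nat ((2*n + 2) choose (n - k)) else 0)
           * of_nat ((n + k) choose k)
       = (\<Sum>j = 0..n. of_nat (j choose k) * of_nat ((n + k) choose (2*j))
                      * 2 ^ (n + k - 2*j) * catalan j :: rat)"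
proof (cases "k \<le> n")
  case False
  thus ?thesis by (simp add: binomial_eq_0)
next
  case True
  then obtain d where nd: "n = k + d" by (metis le_Suc_ex)
  define f where "f j = (of_nat (j choose k) * of_nat ((n + k) choose (2*j))
                      * 2 ^ (n + k - 2*j) * catalan j :: rat)" for j
  define g where "g a = (1 / of_nat (n + 1)) * of_nat ((n + k) choose k) *
     (of_nat ((n+1) choose a) * (if 2*a \<le> d then of_nat ((n+1-a) choose (d-2*a)) * 2^(d-2*a) else 0) :: rat)" for a
  have "(\<Sum>j = 0..n. f j) = (\<Sum>j = k..n. f j)"
  proof -
    have "{0..n} = {0..<k} \<union> {k..n}" using True by auto
    moreover have "(\<Sum>j\<in>{0..<k}. f j) = 0" by (simp add: f_def binomial_eq_0)
    ultimately show ?thesis by (simp add: sum.union_disjoint[of "{0..<k}" "{k..n}"] ivl_disj_int)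
  qed
  also have "\<dots> = (\<Sum>a = 0..d. f (a + k))"
    using sum.shift_bounds_cl_nat_ivl[of f 0 k d] by (simp add: nd add.commute)
  also have "\<dots> = (\<Sum>a = 0..d. g a)"
  proof (rule sum.cong[OF refl])
    fix a assume "a \<in> {0..d}"
    show "f (a + k) = g a"
    proof (cases "2*a \<le> d")
      case True
      then obtain r where dr: "d = 2*a + r" by (metis le_Suc_ex)
      have "n = k + 2*a + r" using nd dr by simp
      moreover have "d - 2*a = n - k - 2*a" using nd by simp
      ultimately show ?thesis using True term_id[of k a r] unfolding f_def g_def by simp
    next
      case False
      hence "(n + k) choose (2*(a+k)) = 0" using nd by (simp add: binomial_eq_0)
      thus ?thesis using False unfolding f_def g_def by (simp add: algebra_simps)
    qed
  qed
  also have "\<dots> = (\<Sum>a \<le> n+1. g a)"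
  proof -
    have "{..n+1} = {0..d} \<union> {d<..n+1}" using nd by auto
    moreover have "(\<Sum>a\<in>{d<..n+1}. g a) = 0" by (rule sum.neutral) (auto simp: g_def)
    moreover have "{0..d} \<inter> {d<..n+1} = {}" by auto
    ultimately show ?thesis by (metis sum.union_disjoint finite_atLeastAtMost finite_greaterThanAtMost add_0_right)
  qed
  also have "\<dots> = (1 / of_nat (n + 1)) * of_nat ((n + k) choose k) * of_nat ((2*(n+1)) choose d)"
    unfolding g_def key[of "n+1" d] by (rule sum_distrib_left[symmetric])
  finally show ?thesis using True nd unfolding f_def by (simp add: algebra_simps)
qed

end
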